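(* Let $d>2$ and let $J_x,J_y$ be the generators of rotations in the irreducible spin-$J$ representation of $SU(2)$ on a $d$-dimensional Hilbert space, $d=2J+1$. Then the Lie algebra generated by $\{J_x,J_y,T^{(2)}_0\}$ is $\mathfrak{su}(d)$.
   Context: For the spin-$J$ representation with basis $\{|J,m\rangle\}_{m=-J}^{J}$, the irreducible spherical tensor operators are $T^{(k)}_q(J)=\sqrt{\frac{2k+1}{2J+1}}\sum_m \langle J,m+q|k,q;J,m\rangle\,|J,m+q\rangle\langle J,m|$ for $0\le k\le 2J$, $-k\le q\le k$, with $\langle\cdot|\cdot\rangle$ Clebsch–Gordan coefficients; in particular $T^{(2)}_0$ is the rank-2, $q=0$ tensor. "The Lie algebra generated by a set of Hermitian operators $\{H_1,\dots,H_n\}$" means the smallest real vector space of operators containing $-iH_1,\dots,-iH_n$ and closed under commutators; $\mathfrak{su}(d)$ is the Lie algebra of traceless anti-Hermitian $d\times d$ matrices. *)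

theory Defs
  imports Complex_Main "Jordan_Normal_Form.Matrix"
begin

text \<open>Angular-momentum quantum numbers are encoded by twice their value
  (integers), so half-integers are represented exactly.\<close>

definition hfact :: "int \<Rightarrow> real" where
  "hfact a = fact (nat (a div 2))"

definition hinvfact :: "int \<Rightarrow> real" where
  "hinvfact a = (if a < 0 then 0 else 1 / fact (nat (a div 2)))"

text \<open>Clebsch--Gordan coefficient <j1 m1; j2 m2 | J M> (Racah formula, Condon--Shortley
  convention); all arguments are twice the physical quantum numbers.\<close>
definition clebsch_gordan :: "int \<Rightarrow> int \<Rightarrow> int \<Rightarrow> int \<Rightarrow> int \<Rightarrow> int \<Rightarrow> real" where
  "clebsch_gordan j1 m1 j2 m2 J M =
    (if M = m1 + m2 \<and> \<bar>m1\<bar> \<le> j1 \<and> \<bar>m2\<bar> \<le> j2 \<and> \<bar>M\<bar> \<le> J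
        \<and> \<bar>j1 - j2\<bar> \<le> J \<and> J \<le> j1 + j2
        \<and> even (j1 + m1) \<and> even (j2 + m2) \<and> even (J + M) \<and> even (j1 + j2 + J)
     then sqrt ((J + 1) * hfact (J + j1 - j2) * hfact (J - j1 + j2) * hfact (j1 + j2 - J)
                / hfact (j1 + j2 + J + 2))
        * sqrt (hfact (J + M) * hfact (J - M) * hfact (j1 - m1) * hfact (j1 + m1)
                * hfact (j2 - m2) * hfact (j2 + m2))
        * (\<Sum>k\<in>{0..(j1 + j2 - J) div 2}. (-1) ^ nat k
             * hinvfact (2 * k) * hinvfact (j1 + j2 - J - 2 * k) * hinvfact (j1 - m1 - 2 * k)
             * hinvfact (j2 + m2 - 2 * k) * hinvfact (J - j2 + m1 + 2 * k)
             * hinvfact (J - j1 - m2 + 2 * k))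
     else 0)"

text \<open>Spin-J representation on C^d, d = 2J+1. Basis index i < d corresponds to |J,m>
  with m = i - J, i.e. doubled: 2m = 2i - (d - 1).  Doubled spin 2J = d - 1.\<close>
definition two_m :: "nat \<Rightarrow> nat \<Rightarrow> int" where
  "two_m d i = 2 * int i - (int d - 1)"

definition spin_of :: "nat \<Rightarrow> real" where
  "spin_of d = (real d - 1) / 2"

definition J_plus :: "nat \<Rightarrow> complex mat" where
  "J_plus d = mat d d (\<lambda>(r, c). if r = c + 1 then
      complex_of_real (sqrt (spin_of d * (spin_of d + 1)
         - (real_of_int (two_m d c) / 2) * (real_of_int (two_m d c) / 2 + 1)))
      else 0)"

definition J_minus :: "nat \<Rightarrow> complex mat" where
  "J_minus d = mat d d (\<lambda>(r, c). if r + 1 = c then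
      complex_of_real (sqrt (spin_of d * (spin_of d + 1)
         - (real_of_int (two_m d c) / 2) * (real_of_int (two_m d c) / 2 - 1)))
      else 0)"

definition J_x :: "nat \<Rightarrow> complex mat" where
  "J_x d = (1 / 2 :: complex) \<cdot>\<^sub>m (J_plus d + J_minus d)"

definition J_y :: "nat \<Rightarrow> complex mat" where
  "J_y d = (1 / (2 * \<i>) :: complex) \<cdot>\<^sub>m (J_plus d - J_minus d)"

text \<open>Irreducible spherical tensor operator T^(k)_q(J) on the spin-J space (d = 2J+1):
  T^(k)_q = sqrt((2k+1)/(2J+1)) \<Sum>_m <J,m+q | k,q; J,m> |J,m+q><J,m|.\<close>
definition T_tensor :: "nat \<Rightarrow> nat \<Rightarrow> int \<Rightarrow> complex mat" where
  "T_tensor d k q = mat d d (\<lambda>(r, c). if int r = int c + q then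
      complex_of_real (sqrt ((2 * real k + 1) / real d)
        * clebsch_gordan (2 * int k) (2 * q) (int d - 1) (two_m d c) (int d - 1) (two_m d r))
      else 0)"

text \<open>Lie algebra generated by Hermitian H_1..H_n: the smallest real subspace of d\<times>d matrices
  containing -i H_j and closed under commutators.\<close>
inductive_set lie_generated :: "nat \<Rightarrow> complex mat set \<Rightarrow> complex mat set"
  for d :: nat and Hs :: "complex mat set" where
  gen: "H \<in> Hs \<Longrightarrow> (- \<i>) \<cdot>\<^sub>m H \<in> lie_generated d Hs"
| zero: "0\<^sub>m d d \<in> lie_generated d Hs"
| add: "A \<in> lie_generated d Hs \<Longrightarrow> B \<in> lie_generated d Hs \<Longrightarrow> A + B \<in> lie_generated d Hs"
| smult: "A \<in> lie_generated d Hs \<Longrightarrow> complex_of_real r \<cdot>\<^sub>m A \<in> lie_generated d Hs"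
| comm: "A \<in> lie_generated d Hs \<Longrightarrow> B \<in> lie_generated d Hs \<Longrightarrow> A * B - B * A \<in> lie_generated d Hs"

definition mat_trace :: "complex mat \<Rightarrow> complex" where
  "mat_trace A = (\<Sum>i<dim_row A. A $$ (i, i))"

definition su :: "nat \<Rightarrow> complex mat set" where
  "su d = {A \<in> carrier_mat d d. (\<forall>i<d. \<forall>j<d. A $$ (i, j) = - cnj (A $$ (j, i))) \<and> mat_trace A = 0}"

end

theory Submission
  imports Defs
begin



lemma mult_entry:
  assumes "A \<in> carrier_mat d d" "B \<in> carrier_mat d d" "r < d" "c < d"
  shows "(A*B)$$(r,c) = (\<Sum>k<d. A$$(r,k) * B$$(k,c))"
  using assms by (auto simp: scalar_prod_def lessThan_atLeast0 intro!: sum.cong)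

lemma su_comm:
  assumes A: "A \<in> su d" and B: "B \<in> su d"
  shows "A * B - B * A \<in> su d"
proof -
  have Ac: "A \<in> carrier_mat d d" and Bc: "B \<in> carrier_mat d d" using A B by (auto simp: su_def)
  have Ah: "\<And>i j. i<d \<Longrightarrow> j<d \<Longrightarrow> A $$ (i, j) = - cnj (A $$ (j, i))" using A unfolding su_def by blast
  have Bh: "\<And>i j. i<d \<Longrightarrow> j<d \<Longrightarrow> B $$ (i, j) = - cnj (B $$ (j, i))" using B unfolding su_def by blast
  have e: "\<And>i j. i<d \<Longrightarrow> j<d \<Longrightarrow> (A * B - B * A) $$ (i,j) = (\<Sum>k<d. A$$(i,k) * B$$(k,j)) - (\<Sum>k<d. B$$(i,k) * A$$(k,j))"
    using Ac Bc by (simp add: mult_entry[symmetric])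
  have herm: "\<forall>i<d. \<forall>j<d. (A * B - B * A) $$ (i,j) = - cnj ((A * B - B * A) $$ (j,i))"
  proof (intro allI impI)
    fix i j assume ij: "i<d" "j<d"
    have "- cnj ((A * B - B * A) $$ (j,i)) = - ((\<Sum>k<d. cnj (A$$(j,k)) * cnj (B$$(k,i))) - (\<Sum>k<d. cnj (B$$(j,k)) * cnj (A$$(k,i))))"
      using ij by (simp add: e)
    also have "\<dots> = - ((\<Sum>k<d. B$$(i,k) * A$$(k,j)) - (\<Sum>k<d. A$$(i,k) * B$$(k,j)))"
    proof -
      have 1: "(\<Sum>k<d. cnj (A$$(j,k)) * cnj (B$$(k,i))) = (\<Sum>k<d. B$$(i,k) * A$$(k,j))"
      proof (rule sum.cong[OF refl])
        fix k assume "k \<in> {..<d}" then have k: "k<d" by simp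
        have "cnj (A$$(j,k)) = - A$$(k,j)" using Ah[OF k ij(2)] by simp
        moreover have "cnj (B$$(k,i)) = - B$$(i,k)" using Bh[OF ij(1) k] by simp
        ultimately show "cnj (A$$(j,k)) * cnj (B$$(k,i)) = B$$(i,k) * A$$(k,j)" by simp
      qed
      have 2: "(\<Sum>k<d. cnj (B$$(j,k)) * cnj (A$$(k,i))) = (\<Sum>k<d. A$$(i,k) * B$$(k,j))"
      proof (rule sum.cong[OF refl])
        fix k assume "k \<in> {..<d}" then have k: "k<d" by simp
        have "cnj (B$$(j,k)) = - B$$(k,j)" using Bh[OF k ij(2)] by simp
        moreover have "cnj (A$$(k,i)) = - A$$(i,k)" using Ah[OF ij(1) k] by simp
        ultimately show "cnj (B$$(j,k)) * cnj (A$$(k,i)) = A$$(i,k) * B$$(k,j)" by simp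
      qed
      show ?thesis using 1 2 by simp
    qed
    also have "\<dots> = (A * B - B * A) $$ (i,j)" using ij by (simp add: e)
    finally show "(A * B - B * A) $$ (i,j) = - cnj ((A * B - B * A) $$ (j,i))" by simp
  qed
  have tr: "mat_trace (A * B - B * A) = 0"
  proof -
    have "mat_trace (A * B - B * A) = (\<Sum>i<d. (A * B - B * A) $$ (i,i))"
      using Ac Bc by (simp add: mat_trace_def)
    also have "\<dots> = (\<Sum>i<d. (\<Sum>k<d. A$$(i,k) * B$$(k,i)) - (\<Sum>k<d. B$$(i,k) * A$$(k,i)))"
      by (rule sum.cong[OF refl], rule e) auto
    also have "\<dots> = (\<Sum>i<d. \<Sum>k<d. A$$(i,k) * B$$(k,i)) - (\<Sum>i<d. \<Sum>k<d. B$$(i,k) * A$$(k,i))"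
      by (simp add: sum_subtractf)
    also have "(\<Sum>i<d. \<Sum>k<d. B$$(i,k) * A$$(k,i)) = (\<Sum>k<d. \<Sum>i<d. B$$(i,k) * A$$(k,i))"
      by (rule sum.swap)
    finally show ?thesis by (simp add: mult.commute)
  qed
  show ?thesis using herm tr Ac Bc by (auto simp: su_def)
qed




definition sg :: "nat \<Rightarrow> nat \<Rightarrow> complex" where
  "sg d c = complex_of_real (sqrt ((real d - 1 - real c) * (real c + 1)))"

lemma two_m_real: "real_of_int (two_m d c) = 2 * real c - real d + 1"
  by (simp add: two_m_def)

lemma Jp_arg: "spin_of d * (spin_of d + 1) - (real_of_int (two_m d c) / 2) * (real_of_int (two_m d c) / 2 + 1)
   = (real d - 1 - real c) * (real c + 1)"
  unfolding two_m_real spin_of_def by (simp add: field_simps; simp add: algebra_simps power2_eq_square)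

lemma Jm_arg: "spin_of d * (spin_of d + 1) - (real_of_int (two_m d (c + 1)) / 2) * (real_of_int (two_m d (c + 1)) / 2 - 1)
   = (real d - 1 - real c) * (real c + 1)"
  unfolding two_m_real spin_of_def by (simp add: field_simps; simp add: algebra_simps power2_eq_square)

lemma J_plus_entry: "r < d \<Longrightarrow> c < d \<Longrightarrow> J_plus d $$ (r,c) = (if r = c + 1 then sg d c else 0)"
  unfolding J_plus_def by (simp only: index_mat prod.case Jp_arg sg_def)

lemma J_minus_entry: "r < d \<Longrightarrow> c < d \<Longrightarrow> J_minus d $$ (r,c) = (if c = r + 1 then sg d r else 0)"
proof (cases "c = Suc r")
  case True
  assume "r < d" "c < d"
  then show ?thesis using True unfolding J_minus_def by (simp only: index_mat prod.case Jm_arg sg_def simp_thms if_True Suc_eq_plus1)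
next
  case False
  assume "r < d" "c < d"
  then show ?thesis using False unfolding J_minus_def by simp
qed

lemma J_x_carrier: "J_x d \<in> carrier_mat d d"
  by (simp add: J_x_def J_plus_def J_minus_def)
lemma J_y_carrier: "J_y d \<in> carrier_mat d d"
  unfolding carrier_mat_def J_y_def by (simp add: J_plus_def J_minus_def)

lemma J_x_entry: "r < d \<Longrightarrow> c < d \<Longrightarrow> J_x d $$ (r,c) =
   (if r = c + 1 then sg d c / 2 else if c = r + 1 then sg d r / 2 else 0)"
proof -
  assume a: "r < d" "c < d"
  have "J_x d $$ (r,c) = (1/2) * (J_plus d $$ (r,c) + J_minus d $$ (r,c))"
    using a by (simp add: J_x_def J_plus_def J_minus_def)
  then show ?thesis using a by (auto simp: J_plus_entry J_minus_entry)
qed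

lemma J_y_entry: "r < d \<Longrightarrow> c < d \<Longrightarrow> J_y d $$ (r,c) =
   (if r = c + 1 then sg d c / (2*\<i>) else if c = r + 1 then - sg d r / (2*\<i>) else 0)"
proof -
  assume a: "r < d" "c < d"
  have "J_y d $$ (r,c) = (1/(2*\<i>)) * (J_plus d $$ (r,c) - J_minus d $$ (r,c))"
    using a by (simp add: J_y_def J_plus_def J_minus_def)
  then show ?thesis using a by (auto simp: J_plus_entry J_minus_entry)
qed

lemma sg_real: "cnj (sg d c) = sg d c" by (simp add: sg_def)

lemma sg_sq: "c < d \<Longrightarrow> sg d c * sg d c = complex_of_real ((real d - 1 - real c) * (real c + 1))"
proof -
  assume "c < d"
  then have "(real d - 1 - real c) * (real c + 1) \<ge> 0" by simp
  then show ?thesis unfolding sg_def by (simp flip: of_real_mult)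
qed




definition ifact :: "int \<Rightarrow> real" where
  "ifact x = (if x < 0 then 0 else 1 / fact (nat x))"

lemma hinv_eq: "a = 2 * x \<Longrightarrow> hinvfact a = ifact x"
  by (simp add: hinvfact_def ifact_def)

lemma hfact_eq: "a = 2 * int k \<Longrightarrow> hfact a = fact k"
  by (simp add: hfact_def)

lemma ifact0: "fact a * ifact (int a) = 1" by (simp add: ifact_def)
lemma ifact1: "fact a * ifact (int a - 1) = real a"
proof (cases a)
  case 0 then show ?thesis by (simp add: ifact_def)
next
  case (Suc m) then show ?thesis by (simp add: ifact_def)
qed
lemma ifact2: "fact a * ifact (int a - 2) = real a * (real a - 1)"
proof (cases a)
  case 0 then show ?thesis by (simp add: ifact_def)
next
  case (Suc m) then show ?thesis
  proof (cases m)
    case 0 then show ?thesis using Suc by (simp add: ifact_def)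
  next
    case (Suc k)
    have "nat (int a - 2) = k" using Suc \<open>a = Suc m\<close> by simp
    then show ?thesis using Suc \<open>a = Suc m\<close> by (simp add: ifact_def algebra_simps)
  qed
qed

lemma cg_val:
  assumes d3: "d \<ge> 3" and c: "c < d"
  shows "clebsch_gordan 4 0 (int d - 1) (two_m d c) (int d - 1) (two_m d c)
     = sqrt ((int d) * hfact 4 * hfact (2 * (int d - 1) - 4) * hfact 4 / hfact (2 * (int d - 1) + 6))
       * ((real c * (real c - 1) + real (d - 1 - c) * (real (d - 1 - c) - 1) - 4 * real c * real (d - 1 - c)) / 2)"
proof -
  define n where "n = int d - 1"
  define b where "b = d - 1 - c"
  have bn: "int b = n - int c" using c by (simp add: n_def b_def)
  have tm: "two_m d c = 2 * int c - n" by (simp add: two_m_def n_def)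
  have n2: "n \<ge> 2" using d3 by (simp add: n_def)
  have cn: "int c \<le> n" using c by (simp add: n_def)
  have cond: "two_m d c = 0 + two_m d c \<and> \<bar>0::int\<bar> \<le> 4 \<and> \<bar>two_m d c\<bar> \<le> n \<and> \<bar>two_m d c\<bar> \<le> n
        \<and> \<bar>4 - n\<bar> \<le> n \<and> n \<le> 4 + n
        \<and> even (4 + (0::int)) \<and> even (n + two_m d c) \<and> even (n + two_m d c) \<and> even (4 + n + n)"
    using n2 cn by (simp add: tm abs_le_iff)
  have s2: "sqrt (hfact (n + two_m d c) * hfact (n - two_m d c) * hfact (4 - 0) * hfact (4 + 0)
                * hfact (n - two_m d c) * hfact (n + two_m d c)) = 2 * fact c * fact b"
  proof -
    have "hfact (n + two_m d c) = fact c" by (rule hfact_eq) (simp add: tm)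
    moreover have "hfact (n - two_m d c) = fact b" by (rule hfact_eq) (simp add: tm bn)
    moreover have "hfact (4 - 0) = 2" "hfact (4 + 0) = 2" by (simp_all add: hfact_def)
    ultimately have "hfact (n + two_m d c) * hfact (n - two_m d c) * hfact (4 - 0) * hfact (4 + 0)
                * hfact (n - two_m d c) * hfact (n + two_m d c) = (2 * fact c * fact b)^2"
      by (simp add: power2_eq_square)
    then show ?thesis by simp
  qed
  define g where "g k = (-1) ^ nat k * ifact k * ifact (2 - k) * ifact (2 - k) * ifact (int c - k)
        * ifact k * ifact (int b - 2 + k)" for k :: int
  have sm: "(\<Sum>k\<in>{0..(4 + n - n) div 2}. (-1) ^ nat k
             * hinvfact (2 * k) * hinvfact (4 + n - n - 2 * k) * hinvfact (4 - 0 - 2 * k)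
             * hinvfact (n + two_m d c - 2 * k) * hinvfact (n - n + 0 + 2 * k)
             * hinvfact (n - 4 - two_m d c + 2 * k)) = g 0 + g 1 + g 2"
  proof -
    have "{0..(4 + n - n) div 2} = {0,1,2::int}" by auto
    moreover have "\<And>k. (-1) ^ nat k
             * hinvfact (2 * k) * hinvfact (4 + n - n - 2 * k) * hinvfact (4 - 0 - 2 * k)
             * hinvfact (n + two_m d c - 2 * k) * hinvfact (n - n + 0 + 2 * k)
             * hinvfact (n - 4 - two_m d c + 2 * k) = g k"
    proof -
      fix k
      have "hinvfact (2 * k) = ifact k" by (rule hinv_eq) simp
      moreover have "hinvfact (4 + n - n - 2 * k) = ifact (2 - k)" by (rule hinv_eq) simp
      moreover have "hinvfact (4 - 0 - 2 * k) = ifact (2 - k)" by (rule hinv_eq) simp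
      moreover have "hinvfact (n + two_m d c - 2 * k) = ifact (int c - k)" by (rule hinv_eq) (simp add: tm)
      moreover have "hinvfact (n - n + 0 + 2 * k) = ifact k" by (rule hinv_eq) simp
      moreover have "hinvfact (n - 4 - two_m d c + 2 * k) = ifact (int b - 2 + k)" by (rule hinv_eq) (simp add: tm bn)
      ultimately show "?thesis k" by (simp add: g_def)
    qed
    ultimately show ?thesis by simp
  qed
  have gsum: "2 * fact c * fact b * (g 0 + g 1 + g 2)
     = (real c * (real c - 1) + real b * (real b - 1) - 4 * real c * real b) / 2"
  proof -
    have i0: "ifact 0 = 1" "ifact 1 = 1" "ifact 2 = 1/2" by (simp_all add: ifact_def)
    have "g 0 = ifact (int c) * ifact (int b - 2) / 4" by (simp add: g_def i0)
    moreover have "g 1 = - ifact (int c - 1) * ifact (int b - 1)" by (simp add: g_def i0)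
    moreover have "g 2 = ifact (int c - 2) * ifact (int b) / 4" by (simp add: g_def i0)
    ultimately have "2 * fact c * fact b * (g 0 + g 1 + g 2)
       = ((fact c * ifact (int c)) * (fact b * ifact (int b - 2)) - 4 * (fact c * ifact (int c - 1)) * (fact b * ifact (int b - 1))
          + (fact c * ifact (int c - 2)) * (fact b * ifact (int b))) / 2"
      by (simp add: algebra_simps)
    then show ?thesis by (simp add: ifact0 ifact1 ifact2 algebra_simps)
  qed
  have "clebsch_gordan 4 0 (int d - 1) (two_m d c) (int d - 1) (two_m d c)
     = sqrt ((real_of_int n + 1) * hfact (n + 4 - n) * hfact (n - 4 + n) * hfact (4 + n - n)
                / hfact (4 + n + n + 2)) * (2 * fact c * fact b) * (g 0 + g 1 + g 2)"
    using cond unfolding clebsch_gordan_def n_def[symmetric] by (simp only: if_True s2 sm simp_thms)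
  also have "(real_of_int n + 1) * hfact (n + 4 - n) * hfact (n - 4 + n) * hfact (4 + n - n)
                / hfact (4 + n + n + 2) = (int d) * hfact 4 * hfact (2 * (int d - 1) - 4) * hfact 4 / hfact (2 * (int d - 1) + 6)"
    by (simp add: n_def algebra_simps)
  finally show ?thesis using gsum by (simp add: b_def mult.assoc)
qed




definition pp :: "nat \<Rightarrow> nat \<Rightarrow> real" where
  "pp d c = ((real d - 1)^2 - (real d - 1) - 6 * real c * (real d - 1 - real c)) / 2"

definition kap :: "nat \<Rightarrow> real" where
  "kap d = sqrt (5 / real d) * sqrt ((int d) * hfact 4 * hfact (2 * (int d - 1) - 4) * hfact 4 / hfact (2 * (int d - 1) + 6))"

lemma kap_pos: "d \<ge> 3 \<Longrightarrow> kap d > 0"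
  unfolding kap_def by (intro mult_pos_pos real_sqrt_gt_zero divide_pos_pos) (auto simp: hfact_def)

lemma T_carrier: "T_tensor d k q \<in> carrier_mat d d" by (simp add: T_tensor_def)

lemma T_entry: assumes "d \<ge> 3" "r < d" "c < d"
  shows "T_tensor d 2 0 $$ (r,c) = (if r = c then complex_of_real (kap d * pp d c) else 0)"
proof -
  have "T_tensor d 2 0 $$ (r,c) = (if r = c then complex_of_real (sqrt (5 / real d)
        * clebsch_gordan 4 0 (int d - 1) (two_m d c) (int d - 1) (two_m d c)) else 0)"
    using assms by (simp add: T_tensor_def)
  also have "\<dots> = (if r = c then complex_of_real (kap d * pp d c) else 0)"
  proof -
    have "real (d - 1 - c) = real d - 1 - real c" using assms by simp
    then have "(real c * (real c - 1) + real (d - 1 - c) * (real (d - 1 - c) - 1) - 4 * real c * real (d - 1 - c)) / 2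
       = pp d c" unfolding pp_def by (simp add: algebra_simps power2_eq_square)
    then show ?thesis using cg_val[OF assms(1) assms(3)] by (simp add: kap_def)
  qed
  finally show ?thesis .
qed

lemma sum_id_real: "(\<Sum>c<m. real c) = real m * (real m - 1) / 2"
  by (induction m) (simp_all add: field_simps)
lemma sum_sq_real: "(\<Sum>c<m. real c * real c) = real m * (real m - 1) * (2 * real m - 1) / 6"
  by (induction m) (simp_all add: field_simps)

lemma pp_sum: "d \<ge> 1 \<Longrightarrow> (\<Sum>c<d. pp d c) = 0"
proof -
  assume d: "d \<ge> 1"
  have "(\<Sum>c<d. pp d c) = (\<Sum>c<d. ((real d - 1)^2 - (real d - 1)) / 2 - 3 * (real d - 1) * real c + 3 * (real c * real c))"
    unfolding pp_def by (rule sum.cong) (auto simp: field_simps power2_eq_square)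
  also have "\<dots> = real d * (((real d - 1)^2 - (real d - 1)) / 2) - 3 * (real d - 1) * (\<Sum>c<d. real c) + 3 * (\<Sum>c<d. real c * real c)"
    by (simp add: sum.distrib sum_subtractf sum_distrib_left)
  also have "\<dots> = 0" unfolding sum_id_real sum_sq_real by (simp add: field_simps power2_eq_square)
  finally show ?thesis .
qed

lemma Jx_herm: "r<d \<Longrightarrow> c<d \<Longrightarrow> J_x d $$ (r,c) = cnj (J_x d $$ (c,r))"
  apply (subst J_x_entry, assumption, assumption)
  apply (subst J_x_entry, assumption, assumption)
  apply (simp add: sg_real)
  done
lemma Jy_herm: "r<d \<Longrightarrow> c<d \<Longrightarrow> J_y d $$ (r,c) = cnj (J_y d $$ (c,r))"
  apply (subst J_y_entry, assumption, assumption)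
  apply (subst J_y_entry, assumption, assumption)
  apply (simp add: sg_real)
  done
lemma T_herm: "d \<ge> 3 \<Longrightarrow> r<d \<Longrightarrow> c<d \<Longrightarrow> T_tensor d 2 0 $$ (r,c) = cnj (T_tensor d 2 0 $$ (c,r))"
  apply (subst T_entry, assumption, assumption, assumption)
  apply (subst T_entry, assumption, assumption, assumption)
  apply simp
  done

lemma gen_su:
  assumes d: "d \<ge> 3" and H: "H \<in> {J_x d, J_y d, T_tensor d 2 0}"
  shows "(- \<i>) \<cdot>\<^sub>m H \<in> su d"
proof -
  have Hc: "H \<in> carrier_mat d d" using H J_x_carrier J_y_carrier T_carrier by auto
  have herm: "\<And>r c. r < d \<Longrightarrow> c < d \<Longrightarrow> H $$ (r,c) = cnj (H $$ (c,r))"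
  proof -
    fix r c assume rc: "r < d" "c < d"
    consider "H = J_x d" | "H = J_y d" | "H = T_tensor d 2 0" using H by auto
    then show "H $$ (r,c) = cnj (H $$ (c,r))"
    proof cases
      case 1 then show ?thesis using rc Jx_herm by blast
    next
      case 2 then show ?thesis using rc Jy_herm by blast
    next
      case 3 then show ?thesis using rc T_herm d by blast
    qed
  qed
  have tr: "(\<Sum>i<d. H $$ (i,i)) = 0"
  proof -
    consider "H = J_x d" | "H = J_y d" | "H = T_tensor d 2 0" using H by auto
    then show ?thesis
    proof cases
      case 3
      have "(\<Sum>i<d. H $$ (i,i)) = (\<Sum>i<d. complex_of_real (kap d * pp d i))"
        using 3 by (auto simp: T_entry[OF d] intro!: sum.cong)
      also have "\<dots> = complex_of_real (kap d * (\<Sum>i<d. pp d i))"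
        by (simp add: sum_distrib_left)
      finally show ?thesis using pp_sum d by simp
    qed (auto simp: J_x_entry J_y_entry)
  qed
  show ?thesis unfolding su_def
  proof (intro CollectI conjI allI impI)
    show "- \<i> \<cdot>\<^sub>m H \<in> carrier_mat d d" using Hc by simp
    fix i j assume ij: "i < d" "j < d"
    show "(- \<i> \<cdot>\<^sub>m H) $$ (i, j) = - cnj ((- \<i> \<cdot>\<^sub>m H) $$ (j, i))"
      using ij Hc herm[OF ij] by simp
  next
    show "mat_trace (- \<i> \<cdot>\<^sub>m H) = 0"
      using Hc tr by (simp add: mat_trace_def sum_negf sum_distrib_left[symmetric])
  qed
qed

lemma su_add: assumes A: "A \<in> su d" and B: "B \<in> su d" shows "A + B \<in> su d"
proof -
  have Ac: "A \<in> carrier_mat d d" and Bc: "B \<in> carrier_mat d d" using A B unfolding su_def by blast+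
  have Ah: "\<And>i j. i<d \<Longrightarrow> j<d \<Longrightarrow> A $$ (i, j) = - cnj (A $$ (j, i))" using A unfolding su_def by blast
  have Bh: "\<And>i j. i<d \<Longrightarrow> j<d \<Longrightarrow> B $$ (i, j) = - cnj (B $$ (j, i))" using B unfolding su_def by blast
  have At: "(\<Sum>i<d. A $$ (i,i)) = 0"
  proof -
    have "mat_trace A = 0" using A unfolding su_def by blast
    then show ?thesis using Ac by (simp add: mat_trace_def)
  qed
  have Bt: "(\<Sum>i<d. B $$ (i,i)) = 0"
  proof -
    have "mat_trace B = 0" using B unfolding su_def by blast
    then show ?thesis using Bc by (simp add: mat_trace_def)
  qed
  show ?thesis unfolding su_def
  proof (intro CollectI conjI allI impI)
    show "A + B \<in> carrier_mat d d" using Ac Bc by simp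
    fix i j assume ij: "i<d" "j<d"
    show "(A + B) $$ (i, j) = - cnj ((A + B) $$ (j, i))"
      using Ac Bc ij Ah[OF ij] Bh[OF ij] by simp
  next
    show "mat_trace (A + B) = 0" using Ac Bc At Bt by (simp add: mat_trace_def sum.distrib)
  qed
qed

lemma su_smult: assumes A: "A \<in> su d" shows "complex_of_real r \<cdot>\<^sub>m A \<in> su d"
proof -
  have Ac: "A \<in> carrier_mat d d" using A unfolding su_def by blast
  have Ah: "\<And>i j. i<d \<Longrightarrow> j<d \<Longrightarrow> A $$ (i, j) = - cnj (A $$ (j, i))" using A unfolding su_def by blast
  have At: "(\<Sum>i<d. A $$ (i,i)) = 0"
  proof -
    have "mat_trace A = 0" using A unfolding su_def by blast
    then show ?thesis using Ac by (simp add: mat_trace_def)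
  qed
  show ?thesis unfolding su_def
  proof (intro CollectI conjI allI impI)
    show "complex_of_real r \<cdot>\<^sub>m A \<in> carrier_mat d d" using Ac by simp
    fix i j assume ij: "i<d" "j<d"
    show "(complex_of_real r \<cdot>\<^sub>m A) $$ (i, j) = - cnj ((complex_of_real r \<cdot>\<^sub>m A) $$ (j, i))"
      using Ac ij Ah[OF ij] by simp
  next
    show "mat_trace (complex_of_real r \<cdot>\<^sub>m A) = 0" using Ac At by (simp add: mat_trace_def sum_distrib_left[symmetric])
  qed
qed

lemma su_zero: "0\<^sub>m d d \<in> su d"
  unfolding su_def mat_trace_def by auto

lemma sub1:
  assumes d: "d \<ge> 3"
  shows "lie_generated d {J_x d, J_y d, T_tensor d 2 0} \<subseteq> su d"
proof
  fix A assume "A \<in> lie_generated d {J_x d, J_y d, T_tensor d 2 0}"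
  then show "A \<in> su d"
  proof (induction rule: lie_generated.induct)
    case (gen H) then show ?case by (rule gen_su[OF d])
  next
    case zero then show ?case by (rule su_zero)
  next
    case (add A B) then show ?case by (blast intro: su_add)
  next
    case (smult A r) then show ?case by (blast intro: su_smult)
  next
    case (comm A B) then show ?case by (blast intro: su_comm)
  qed
qed




lemma tri_sum:
  fixes d r :: nat
  assumes "\<And>k. k < d \<Longrightarrow> k \<noteq> r+1 \<Longrightarrow> k+1 \<noteq> r \<Longrightarrow> f k = 0"
  shows "(\<Sum>k<d. f k) = (if r+1<d then f (r+1) else 0) + (if 0<r \<and> r-1<d then f (r-1) else 0)"
proof -
  have "(\<Sum>k<d. f k) = (\<Sum>k<d. (if k = r+1 then f (r+1) else 0) + (if k = r-1 \<and> 0 < r then f (r-1) else 0))"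
  proof (rule sum.cong[OF refl])
    fix k assume k: "k \<in> {..<d}"
    show "f k = (if k = r+1 then f (r+1) else 0) + (if k = r-1 \<and> 0 < r then f (r-1) else 0)"
    proof (cases "k = r+1")
      case True
      then have "\<not> (k = r-1 \<and> 0 < r)" by arith
      then show ?thesis using True by simp
    next
      case False
      show ?thesis
      proof (cases "k+1 = r")
        case True then show ?thesis using False by auto
      next
        case F2: False
        then have "\<not> (k = r-1 \<and> 0 < r)" by auto
        have "f k = 0" using assms[of k] k False F2 by simp
        then show ?thesis using \<open>\<not> (k = r-1 \<and> 0 < r)\<close> False by (simp only: if_not_P if_False add_0)
      qed
    qed
  qed
  also have "\<dots> = (\<Sum>k<d. (if k = r+1 then f (r+1) else 0)) + (\<Sum>k<d. if k = r-1 \<and> 0 < r then f (r-1) else 0)"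
    by (rule sum.distrib)
  also have "\<dots> = (if r+1<d then f (r+1) else 0) + (if 0<r \<and> r-1<d then f (r-1) else 0)"
    by (cases "0<r") (simp_all add: sum.delta)
  finally show ?thesis .
qed



lemma fr1: assumes "r+1 < d" "c < d"
  shows "J_x d $$ (r,r+1) * J_y d $$ (r+1,c) - J_y d $$ (r,r+1) * J_x d $$ (r+1,c)
       = (if c = r then sg d r * sg d r / (2*\<i>) else 0)"
  using assms by (auto simp: J_x_entry J_y_entry field_simps)

lemma fr2: assumes "0 < r" "r < d" "c < d"
  shows "J_x d $$ (r,r-1) * J_y d $$ (r-1,c) - J_y d $$ (r,r-1) * J_x d $$ (r-1,c)
       = (if c = r then - sg d (r-1) * sg d (r-1) / (2*\<i>) else 0)"
  using assms by (auto simp: J_x_entry J_y_entry field_simps)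


lemma Jxy_comm: assumes r: "r < d" and c: "c < d"
  shows "(J_x d * J_y d - J_y d * J_x d) $$ (r,c) = (if r = c then \<i> * complex_of_real (real r - (real d - 1)/2) else 0)"
proof -
  define f where "f k = J_x d $$ (r,k) * J_y d $$ (k,c) - J_y d $$ (r,k) * J_x d $$ (k,c)" for k
  have "(J_x d * J_y d - J_y d * J_x d) $$ (r,c) = (\<Sum>k<d. J_x d $$ (r,k) * J_y d $$ (k,c)) - (\<Sum>k<d. J_y d $$ (r,k) * J_x d $$ (k,c))"
    using r c J_x_carrier[of d] J_y_carrier[of d] by (simp add: mult_entry[symmetric] carrier_matD)
  also have "\<dots> = (\<Sum>k<d. f k)" by (simp add: f_def sum_subtractf)
  also have "\<dots> = (if r+1<d then f (r+1) else 0) + (if 0<r \<and> r-1<d then f (r-1) else 0)"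
    by (rule tri_sum) (use r in \<open>auto simp: f_def J_x_entry J_y_entry\<close>)
  also have "\<dots> = (if r = c then \<i> * complex_of_real (real r - (real d - 1)/2) else 0)"
  proof (cases "r = c")
    case False
    then show ?thesis using fr1[of r d c] fr2[of r d c] r c by (auto simp: f_def)
  next
    case True
    have A: "(if r+1<d then f (r+1) else 0) = complex_of_real ((real d - 1 - real r) * (real r + 1)) / (2*\<i>)"
    proof (cases "r+1<d")
      case True
      then show ?thesis using fr1[of r d c] \<open>r = c\<close> c sg_sq[of r d] by (simp add: f_def)
    next
      case False
      then have "real d - 1 - real r = 0" using r by simp
      then show ?thesis using False by simp
    qed
    have B: "(if 0<r \<and> r-1<d then f (r-1) else 0) = - complex_of_real ((real d - real r) * real r) / (2*\<i>)"
    proof (cases "0<r")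
      case True
      have "sg d (r-1) * sg d (r-1) = complex_of_real ((real d - real r) * real r)"
        using sg_sq[of "r-1" d] r True by (simp add: of_nat_diff)
      then show ?thesis using fr2[of r d c] \<open>r = c\<close> c r True by (simp add: f_def)
    next
      case False
      then show ?thesis by simp
    qed
    show ?thesis unfolding A B using True
      by (simp add: field_simps)
  qed
  finally show ?thesis .
qed





lemma LG_carrier: assumes Hs: "Hs \<subseteq> carrier_mat d d" shows "A \<in> lie_generated d Hs \<Longrightarrow> A \<in> carrier_mat d d"
proof (induction rule: lie_generated.induct)
  case (gen H) then show ?case using Hs by auto
next
  case zero then show ?case by simp
next
  case (add A B) then show ?case by simp
next
  case (smult A r) then show ?case by simp
next
  case (comm A B) then show ?case by (intro minus_carrier_mat mult_carrier_mat) auto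
qed

lemma LG_eq: assumes "A \<in> lie_generated d Hs" "A \<in> carrier_mat d d" "B \<in> carrier_mat d d"
  "\<And>r c. r < d \<Longrightarrow> c < d \<Longrightarrow> B $$ (r,c) = A $$ (r,c)"
  shows "B \<in> lie_generated d Hs"
proof -
  have "B = A" by (rule eq_matI) (use assms in auto)
  then show ?thesis using assms(1) by simp
qed

lemma LG_sum: assumes Hs: "Hs \<subseteq> carrier_mat d d" and fin: "finite S"
  shows "(\<forall>x\<in>S. F x \<in> lie_generated d Hs) \<Longrightarrow> \<exists>M\<in>lie_generated d Hs. \<forall>r<d. \<forall>c<d. M $$ (r,c) = (\<Sum>x\<in>S. F x $$ (r,c))"
  using fin
proof (induction S rule: finite_induct)
  case empty then show ?case by (intro bexI[of _ "0\<^sub>m d d"]) (auto intro: lie_generated.zero)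
next
  case (insert x S)
  have "\<forall>x\<in>S. F x \<in> lie_generated d Hs" using insert.prems by simp
  then obtain M where M: "M \<in> lie_generated d Hs" "\<forall>r<d. \<forall>c<d. M $$ (r,c) = (\<Sum>x\<in>S. F x $$ (r,c))"
    using insert.IH by blast
  have Fx: "F x \<in> lie_generated d Hs" using insert.prems by simp
  have FM: "F x + M \<in> lie_generated d Hs" using Fx M(1) by (rule lie_generated.add)
  have "M \<in> carrier_mat d d" using LG_carrier[OF Hs M(1)] .
  have FMe: "\<forall>r<d. \<forall>c<d. (F x + M) $$ (r,c) = (\<Sum>x\<in>insert x S. F x $$ (r,c))"
  proof (intro allI impI)
    fix r c assume rc: "r < d" "c < d"
    have "(F x + M) $$ (r,c) = F x $$ (r,c) + M $$ (r,c)" using rc \<open>M \<in> carrier_mat d d\<close> by simp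
    also have "\<dots> = F x $$ (r,c) + (\<Sum>x\<in>S. F x $$ (r,c))" using M(2) rc by simp
    also have "\<dots> = (\<Sum>x\<in>insert x S. F x $$ (r,c))" using insert.hyps by simp
    finally show "(F x + M) $$ (r,c) = (\<Sum>x\<in>insert x S. F x $$ (r,c))" .
  qed
  show ?case
    apply (rule bexI[where x="F x + M"])
     apply (rule FMe)
    apply (rule FM)
    done
qed

lemma sep:
  fixes w :: "nat \<times> nat \<Rightarrow> real"
  assumes Hs: "Hs \<subseteq> carrier_mat d d"
    and psi: "\<And>A. A \<in> lie_generated d Hs \<Longrightarrow> mat d d (\<lambda>(r,c). complex_of_real (w (r,c)) * A $$ (r,c)) \<in> lie_generated d Hs"
    and fin: "finite V"
  shows "M \<in> lie_generated d Hs \<Longrightarrow> (\<forall>r<d. \<forall>c<d. M $$ (r,c) \<noteq> 0 \<longrightarrow> w (r,c) \<in> V) \<Longrightarrow> \<mu> \<in> V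
    \<Longrightarrow> mat d d (\<lambda>(r,c). if w (r,c) = \<mu> then M $$ (r,c) else 0) \<in> lie_generated d Hs"
  using fin
proof (induction V arbitrary: M rule: finite_psubset_induct)
  case (psubset V)
  have Mc: "M \<in> carrier_mat d d" using LG_carrier[OF Hs psubset.prems(1)] .
  show ?case
  proof (cases "\<exists>b\<in>V. b \<noteq> \<mu>")
    case False
    show ?thesis
    proof (rule LG_eq[OF psubset.prems(1) Mc])
      show "mat d d (\<lambda>(r, c). if w (r, c) = \<mu> then M $$ (r, c) else 0) \<in> carrier_mat d d" by simp
      fix r c assume rc: "r < d" "c < d"
      show "mat d d (\<lambda>(r, c). if w (r, c) = \<mu> then M $$ (r, c) else 0) $$ (r, c) = M $$ (r, c)"
        using rc psubset.prems(2) False by auto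
    qed
  next
    case True
    then obtain b where b: "b \<in> V" "b \<noteq> \<mu>" by auto
    define M2 where "M2 = mat d d (\<lambda>(r,c). complex_of_real (w (r,c)) * M $$ (r,c)) + complex_of_real (- b) \<cdot>\<^sub>m M"
    have M2L: "M2 \<in> lie_generated d Hs" unfolding M2_def
      by (intro lie_generated.add lie_generated.smult psi psubset.prems(1))
    have M2e: "\<And>r c. r<d \<Longrightarrow> c<d \<Longrightarrow> M2 $$ (r,c) = complex_of_real (w (r,c) - b) * M $$ (r,c)"
      using Mc by (simp add: M2_def algebra_simps)
    have sub: "V - {b} \<subset> V" using b by auto
    have supp: "\<forall>r<d. \<forall>c<d. M2 $$ (r,c) \<noteq> 0 \<longrightarrow> w (r,c) \<in> V - {b}"
      using psubset.prems(2) M2e by auto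
    have P2: "mat d d (\<lambda>(r,c). if w (r,c) = \<mu> then M2 $$ (r,c) else 0) \<in> lie_generated d Hs"
    proof -
      have "\<mu> \<in> V - {b}" using psubset.prems(3) b by auto
      then show ?thesis by (rule psubset.IH[OF sub M2L supp])
    qed
    have "complex_of_real (1 / (\<mu> - b)) \<cdot>\<^sub>m mat d d (\<lambda>(r,c). if w (r,c) = \<mu> then M2 $$ (r,c) else 0) \<in> lie_generated d Hs"
      using P2 by (rule lie_generated.smult)
    then show ?thesis
    proof (rule LG_eq)
      show "complex_of_real (1 / (\<mu> - b)) \<cdot>\<^sub>m mat d d (\<lambda>(r,c). if w (r,c) = \<mu> then M2 $$ (r,c) else 0) \<in> carrier_mat d d" by simp
      show "mat d d (\<lambda>(r, c). if w (r, c) = \<mu> then M $$ (r, c) else 0) \<in> carrier_mat d d" by simp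
      fix r c assume rc: "r < d" "c < d"
      have nz: "\<mu> - b \<noteq> 0" using b by simp
      have one: "complex_of_real (1/(\<mu>-b)) * complex_of_real (\<mu> - b) = 1"
      proof -
        have "complex_of_real (1/(\<mu>-b)) * complex_of_real (\<mu> - b) = complex_of_real (1/(\<mu>-b) * (\<mu>-b))"
          by (rule of_real_mult[symmetric])
        also have "\<dots> = 1" using nz by simp
        finally show ?thesis .
      qed
      show "mat d d (\<lambda>(r, c). if w (r, c) = \<mu> then M $$ (r, c) else 0) $$ (r, c) =
         (complex_of_real (1 / (\<mu> - b)) \<cdot>\<^sub>m mat d d (\<lambda>(r,c). if w (r,c) = \<mu> then M2 $$ (r,c) else 0)) $$ (r, c)"
      proof (cases "w (r,c) = \<mu>")
        case True
        then have "(complex_of_real (1 / (\<mu> - b)) \<cdot>\<^sub>m mat d d (\<lambda>(r,c). if w (r,c) = \<mu> then M2 $$ (r,c) else 0)) $$ (r, c)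
           = complex_of_real (1/(\<mu>-b)) * (complex_of_real (\<mu> - b) * M $$ (r,c))"
          using rc M2e[OF rc] by simp
        also have "\<dots> = M $$ (r,c)" by (simp only: mult.assoc[symmetric] one mult_1)
        finally show ?thesis using rc True by simp
      next
        case False
        then show ?thesis using rc by simp
      qed
    qed
  qed
qed

lemma diag_comm:
  fixes H M :: "complex mat"
  assumes H: "H \<in> carrier_mat d d" and M: "M \<in> carrier_mat d d"
    and He: "\<And>r c. r < d \<Longrightarrow> c < d \<Longrightarrow> H $$ (r,c) = (if r = c then h r else 0)"
    and rc: "r < d" "c < d"
  shows "(H * M - M * H) $$ (r,c) = (h r - h c) * M $$ (r,c)"
proof -
  have 1: "(\<Sum>k<d. H$$(r,k) * M$$(k,c)) = h r * M $$ (r,c)"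
  proof -
    have "(\<Sum>k<d. H$$(r,k) * M$$(k,c)) = (\<Sum>k<d. if k = r then h r * M $$ (r,c) else 0)"
      by (rule sum.cong) (use He rc in auto)
    then show ?thesis using rc by (simp add: sum.delta)
  qed
  have 2: "(\<Sum>k<d. M$$(r,k) * H$$(k,c)) = M $$ (r,c) * h c"
  proof -
    have "(\<Sum>k<d. M$$(r,k) * H$$(k,c)) = (\<Sum>k<d. if k = c then M $$ (r,c) * h c else 0)"
      by (rule sum.cong) (use He rc in auto)
    then show ?thesis using rc by (simp add: sum.delta)
  qed
  have "(H * M - M * H) $$ (r,c) = (\<Sum>k<d. H$$(r,k) * M$$(k,c)) - (\<Sum>k<d. M$$(r,k) * H$$(k,c))"
    using H M rc by (simp add: mult_entry[symmetric] carrier_matD)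
  then show ?thesis unfolding 1 2 by (simp add: algebra_simps)
qed

lemma two_sum:
  fixes a b d :: nat
  assumes "a \<noteq> b" "a < d" "b < d" "\<And>k. k < d \<Longrightarrow> k \<noteq> a \<Longrightarrow> k \<noteq> b \<Longrightarrow> f k = 0"
  shows "(\<Sum>k<d. f k) = f a + f b"
proof -
  have "(\<Sum>k<d. f k) = (\<Sum>k\<in>{a,b}. f k)"
    by (rule sum.mono_neutral_right) (use assms in auto)
  then show ?thesis using assms by simp
qed




definition Sk :: "nat \<Rightarrow> nat \<Rightarrow> nat \<Rightarrow> complex mat" where
  "Sk d i j = mat d d (\<lambda>(r,s). if r = i \<and> s = j then 1 else if r = j \<and> s = i then -1 else 0)"
definition Imm :: "nat \<Rightarrow> nat \<Rightarrow> nat \<Rightarrow> complex mat" where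
  "Imm d i j = mat d d (\<lambda>(r,s). if (r = i \<and> s = j) \<or> (r = j \<and> s = i) then \<i> else 0)"
definition Dg :: "nat \<Rightarrow> nat \<Rightarrow> nat \<Rightarrow> complex mat" where
  "Dg d i j = mat d d (\<lambda>(r,s). if r = s \<and> r = i then \<i> else if r = s \<and> r = j then - \<i> else 0)"

lemma prodL:
  fixes A B :: "complex mat"
  assumes "A \<in> carrier_mat d d" "B \<in> carrier_mat d d" "i \<noteq> j" "i < d" "j < d" "r < d" "s < d"
    "\<And>m. m < d \<Longrightarrow> m \<noteq> i \<Longrightarrow> m \<noteq> j \<Longrightarrow> A $$ (r,m) = 0"
  shows "(A * B) $$ (r,s) = A $$ (r,i) * B $$ (i,s) + A $$ (r,j) * B $$ (j,s)"
proof -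
  have "(A * B) $$ (r,s) = (\<Sum>m<d. A $$ (r,m) * B $$ (m,s))" using assms(1,2,6,7) by (rule mult_entry)
  also have "\<dots> = A $$ (r,i) * B $$ (i,s) + A $$ (r,j) * B $$ (j,s)"
    by (rule two_sum) (use assms in auto)
  finally show ?thesis .
qed

lemma Sk_carrier[simp]: "Sk d i j \<in> carrier_mat d d" by (simp add: Sk_def)
lemma Imm_carrier[simp]: "Imm d i j \<in> carrier_mat d d" by (simp add: Imm_def)
lemma Dg_carrier[simp]: "Dg d i j \<in> carrier_mat d d" by (simp add: Dg_def)

lemma dims[simp]: "dim_row (Sk d i j) = d" "dim_col (Sk d i j) = d" "dim_row (Imm d i j) = d" "dim_col (Imm d i j) = d"
  "dim_row (Dg d i j) = d" "dim_col (Dg d i j) = d"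
  by (simp_all add: Sk_def Imm_def Dg_def)

lemma Sk_e: "r < d \<Longrightarrow> s < d \<Longrightarrow> Sk d i j $$ (r,s) = (if r = i \<and> s = j then 1 else if r = j \<and> s = i then -1 else 0)"
  by (simp add: Sk_def)
lemma Imm_e: "r < d \<Longrightarrow> s < d \<Longrightarrow> Imm d i j $$ (r,s) = (if (r = i \<and> s = j) \<or> (r = j \<and> s = i) then \<i> else 0)"
  by (simp add: Imm_def)
lemma Dg_e: "r < d \<Longrightarrow> s < d \<Longrightarrow> Dg d i j $$ (r,s) = (if r = s \<and> r = i then \<i> else if r = s \<and> r = j then - \<i> else 0)"
  by (simp add: Dg_def)

lemma C1: assumes "i < d" "j < d" "k < d" "i \<noteq> j" "j \<noteq> k" "i \<noteq> k"
  shows "Sk d i j * Sk d j k - Sk d j k * Sk d i j = Sk d i k"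
proof (rule eq_matI)
  fix r s assume "r < dim_row (Sk d i k)" "s < dim_col (Sk d i k)"
  then have rs: "r < d" "s < d" by (simp_all add: Sk_def)
  have 1: "(Sk d i j * Sk d j k) $$ (r,s) = Sk d i j $$ (r,i) * Sk d j k $$ (i,s) + Sk d i j $$ (r,j) * Sk d j k $$ (j,s)"
    by (rule prodL) (use assms rs in \<open>auto simp: Sk_e\<close>)
  have 2: "(Sk d j k * Sk d i j) $$ (r,s) = Sk d j k $$ (r,j) * Sk d i j $$ (j,s) + Sk d j k $$ (r,k) * Sk d i j $$ (k,s)"
    by (rule prodL) (use assms rs in \<open>auto simp: Sk_e\<close>)
  show "(Sk d i j * Sk d j k - Sk d j k * Sk d i j) $$ (r,s) = Sk d i k $$ (r,s)"
    using rs assms 1 2 by (simp add: Sk_e)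
qed (auto simp: Sk_def)

lemma C2: assumes "i < d" "j < d" "k < d" "i \<noteq> j" "j \<noteq> k" "i \<noteq> k"
  shows "Imm d i j * Sk d j k - Sk d j k * Imm d i j = Imm d i k"
proof (rule eq_matI)
  fix r s assume "r < dim_row (Imm d i k)" "s < dim_col (Imm d i k)"
  then have rs: "r < d" "s < d" by (simp_all add: Imm_def)
  have 1: "(Imm d i j * Sk d j k) $$ (r,s) = Imm d i j $$ (r,i) * Sk d j k $$ (i,s) + Imm d i j $$ (r,j) * Sk d j k $$ (j,s)"
    by (rule prodL) (use assms rs in \<open>auto simp: Imm_e\<close>)
  have 2: "(Sk d j k * Imm d i j) $$ (r,s) = Sk d j k $$ (r,j) * Imm d i j $$ (j,s) + Sk d j k $$ (r,k) * Imm d i j $$ (k,s)"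
    by (rule prodL) (use assms rs in \<open>auto simp: Sk_e\<close>)
  show "(Imm d i j * Sk d j k - Sk d j k * Imm d i j) $$ (r,s) = Imm d i k $$ (r,s)"
    using rs assms 1 2 by (simp add: Sk_e Imm_e)
qed (auto simp: Imm_def)

lemma C3: assumes "i < d" "j < d" "i \<noteq> j"
  shows "Sk d i j * Imm d i j - Imm d i j * Sk d i j = 2 \<cdot>\<^sub>m Dg d i j"
proof (rule eq_matI)
  fix r s assume "r < dim_row (2 \<cdot>\<^sub>m Dg d i j)" "s < dim_col (2 \<cdot>\<^sub>m Dg d i j)"
  then have rs: "r < d" "s < d" by (simp_all add: Dg_def)
  have 1: "(Sk d i j * Imm d i j) $$ (r,s) = Sk d i j $$ (r,i) * Imm d i j $$ (i,s) + Sk d i j $$ (r,j) * Imm d i j $$ (j,s)"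
    by (rule prodL) (use assms rs in \<open>auto simp: Sk_e\<close>)
  have 2: "(Imm d i j * Sk d i j) $$ (r,s) = Imm d i j $$ (r,i) * Sk d i j $$ (i,s) + Imm d i j $$ (r,j) * Sk d i j $$ (j,s)"
    by (rule prodL) (use assms rs in \<open>auto simp: Imm_e\<close>)
  show "(Sk d i j * Imm d i j - Imm d i j * Sk d i j) $$ (r,s) = (2 \<cdot>\<^sub>m Dg d i j) $$ (r,s)"
    using rs assms 1 2 by (simp add: Sk_e Imm_e Dg_e)
qed (auto simp: Dg_def)




abbreviation LL :: "nat \<Rightarrow> complex mat set" where
  "LL d \<equiv> lie_generated d {J_x d, J_y d, T_tensor d 2 0}"

lemma HS_carrier: "{J_x d, J_y d, T_tensor d 2 0} \<subseteq> carrier_mat d d"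
  using J_x_carrier J_y_carrier T_carrier by auto

lemma LL_carrier: "A \<in> LL d \<Longrightarrow> A \<in> carrier_mat d d"
  by (rule LG_carrier[OF HS_carrier])

definition Zm :: "nat \<Rightarrow> complex mat" where
  "Zm d = ((- \<i>) \<cdot>\<^sub>m J_x d) * ((- \<i>) \<cdot>\<^sub>m J_y d) - ((- \<i>) \<cdot>\<^sub>m J_y d) * ((- \<i>) \<cdot>\<^sub>m J_x d)"

lemma Zm_LL: "Zm d \<in> LL d"
  unfolding Zm_def by (intro lie_generated.comm lie_generated.gen) auto

lemma Zm_e: assumes "r < d" "c < d"
  shows "Zm d $$ (r,c) = (if r = c then - \<i> * complex_of_real (real r - (real d - 1)/2) else 0)"
proof -
  have "Zm d = (-1) \<cdot>\<^sub>m (J_x d * J_y d - J_y d * J_x d)"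
    unfolding Zm_def using J_x_carrier[of d] J_y_carrier[of d]
    by (intro eq_matI) (simp_all add: mult_smult_assoc_mat mult_smult_distrib carrier_matD)
  then show ?thesis using assms Jxy_comm[OF assms] J_x_carrier[of d] J_y_carrier[of d] by (simp add: carrier_matD)
qed

definition eta :: "nat \<Rightarrow> nat \<Rightarrow> real" where
  "eta d r = kap d * pp d r + (3 * kap d / 2) * (real r - (real d - 1) / 2)"

definition Hm :: "nat \<Rightarrow> complex mat" where
  "Hm d = (- \<i>) \<cdot>\<^sub>m T_tensor d 2 0 + complex_of_real (3 * kap d / 2) \<cdot>\<^sub>m Zm d"

lemma Hm_LL: "Hm d \<in> LL d"
  unfolding Hm_def by (intro lie_generated.add lie_generated.smult lie_generated.gen Zm_LL) auto

lemma Hm_carrier: "Hm d \<in> carrier_mat d d" using LL_carrier[OF Hm_LL] .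

lemma Hm_e: assumes d: "d \<ge> 3" and rc: "r < d" "c < d"
  shows "Hm d $$ (r,c) = (if r = c then - \<i> * complex_of_real (eta d r) else 0)"
proof -
  have Zc: "Zm d \<in> carrier_mat d d" using LL_carrier[OF Zm_LL] .
  have "Hm d $$ (r,c) = - \<i> * T_tensor d 2 0 $$ (r,c) + complex_of_real (3 * kap d / 2) * Zm d $$ (r,c)"
    unfolding Hm_def using rc Zc T_carrier[of d 2 0] by (simp add: carrier_matD)
  also have "\<dots> = (if r = c then - \<i> * complex_of_real (eta d r) else 0)"
    using rc by (simp add: T_entry[OF d rc] Zm_e eta_def field_simps)
  finally show ?thesis .
qed

definition gap :: "nat \<Rightarrow> nat \<Rightarrow> real" where
  "gap d c = eta d c - eta d (c+1)"

lemma gap_eq: "gap d c = (3 * kap d / 2) * (2 * real d - 5 - 4 * real c)"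
  unfolding gap_def eta_def pp_def by (simp add: field_simps power2_eq_square)

lemma gap_nz: assumes "d \<ge> 3" shows "gap d c \<noteq> 0"
proof -
  have k: "kap d \<noteq> 0" using kap_pos[OF assms] by simp
  have "2 * real d - 5 - 4 * real c \<noteq> 0"
  proof
    assume "2 * real d - 5 - 4 * real c = 0"
    then have "real (2 * d) = real (4 * c + 5)" by simp
    then have "2 * d = 4 * c + 5" by (simp only: of_nat_eq_iff)
    then show False by presburger
  qed
  then show ?thesis using k unfolding gap_eq by simp
qed

lemma gap_sq_inj: assumes "d \<ge> 3" "(gap d c)^2 = (gap d c')^2" shows "c = c'"
proof -
  have k: "kap d \<noteq> 0" using kap_pos[OF assms(1)] by simp
  have "(2 * real d - 5 - 4 * real c)^2 = (2 * real d - 5 - 4 * real c')^2"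
  proof -
    have "(3 * kap d / 2)^2 * (2 * real d - 5 - 4 * real c)^2 = (3 * kap d / 2)^2 * (2 * real d - 5 - 4 * real c')^2"
      using assms(2) unfolding gap_eq by (simp only: power_mult_distrib)
    moreover have "(3 * kap d / 2)^2 \<noteq> 0" using k by simp
    ultimately show ?thesis by simp
  qed
  then have "2 * real d - 5 - 4 * real c = 2 * real d - 5 - 4 * real c' \<or> 2 * real d - 5 - 4 * real c = - (2 * real d - 5 - 4 * real c')"
    using power2_eq_iff by blast
  then show ?thesis
  proof
    assume "2 * real d - 5 - 4 * real c = 2 * real d - 5 - 4 * real c'"
    then show ?thesis by simp
  next
    assume "2 * real d - 5 - 4 * real c = - (2 * real d - 5 - 4 * real c')"
    then have "real (4 * d) = real (4 * c + 4 * c' + 10)" by simp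
    then have "4 * d = 4 * c + 4 * c' + 10" by (simp only: of_nat_eq_iff)
    then show ?thesis by presburger
  qed
qed




definition wt :: "nat \<Rightarrow> nat \<times> nat \<Rightarrow> real" where
  "wt d rc = - ((eta d (fst rc) - eta d (snd rc)) ^ 2)"

lemma hsq: "(- \<i> * complex_of_real a - - \<i> * complex_of_real b) * ((- \<i> * complex_of_real a - - \<i> * complex_of_real b) * x)
   = complex_of_real (- ((a - b)^2)) * x"
  by (simp add: algebra_simps power2_eq_square)

lemma psi_LL: assumes d: "d \<ge> 3" and A: "A \<in> LL d"
  shows "mat d d (\<lambda>(r,c). complex_of_real (wt d (r,c)) * A $$ (r,c)) \<in> LL d"
proof -
  have Ac: "A \<in> carrier_mat d d" using LL_carrier[OF A] .
  define B where "B = Hm d * A - A * Hm d"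
  define C where "C = Hm d * B - B * Hm d"
  have BL: "B \<in> LL d" unfolding B_def by (intro lie_generated.comm Hm_LL A)
  have CL: "C \<in> LL d" unfolding C_def by (intro lie_generated.comm Hm_LL BL)
  have Bc: "B \<in> carrier_mat d d" using LL_carrier[OF BL] .
  have Be: "\<And>r c. r < d \<Longrightarrow> c < d \<Longrightarrow> B $$ (r,c) = (- \<i> * complex_of_real (eta d r) - - \<i> * complex_of_real (eta d c)) * A $$ (r,c)"
    unfolding B_def by (rule diag_comm[OF Hm_carrier Ac]) (auto simp: Hm_e[OF d])
  have Ce: "\<And>r c. r < d \<Longrightarrow> c < d \<Longrightarrow> C $$ (r,c) = (- \<i> * complex_of_real (eta d r) - - \<i> * complex_of_real (eta d c)) * B $$ (r,c)"
    unfolding C_def by (rule diag_comm[OF Hm_carrier Bc]) (auto simp: Hm_e[OF d])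
  show ?thesis
  proof (rule LG_eq[OF CL])
    show "C \<in> carrier_mat d d" using LL_carrier[OF CL] .
    show "mat d d (\<lambda>(r,c). complex_of_real (wt d (r,c)) * A $$ (r,c)) \<in> carrier_mat d d" by simp
    fix r c assume rc: "r < d" "c < d"
    show "mat d d (\<lambda>(r,c). complex_of_real (wt d (r,c)) * A $$ (r,c)) $$ (r,c) = C $$ (r,c)"
    proof -
      have 1: "C $$ (r,c) = complex_of_real (wt d (r,c)) * A $$ (r,c)"
        unfolding Ce[OF rc] Be[OF rc] hsq wt_def by simp
      show ?thesis using rc 1 by simp
    qed
  qed
qed

definition Pc :: "nat \<Rightarrow> nat \<Rightarrow> complex mat" where
  "Pc d c = mat d d (\<lambda>(r,s). if wt d (r,s) = wt d (c, c+1) then ((- \<i>) \<cdot>\<^sub>m J_x d) $$ (r,s) else 0)"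

lemma Pc_LL: assumes d: "d \<ge> 3" and c: "c + 1 < d" shows "Pc d c \<in> LL d"
  unfolding Pc_def
proof (rule sep[OF HS_carrier _ _ _ _])
  show "\<And>A. A \<in> LL d \<Longrightarrow> mat d d (\<lambda>(r, c). complex_of_real (wt d (r, c)) * A $$ (r, c)) \<in> LL d"
    by (rule psi_LL[OF d])
  show "finite (wt d ` ({..<d} \<times> {..<d}))" by simp
  show "(- \<i>) \<cdot>\<^sub>m J_x d \<in> LL d" by (intro lie_generated.gen) simp
  show "\<forall>r<d. \<forall>ca<d. ((- \<i>) \<cdot>\<^sub>m J_x d) $$ (r, ca) \<noteq> 0 \<longrightarrow> wt d (r, ca) \<in> wt d ` ({..<d} \<times> {..<d})"
    by auto
  show "wt d (c, c + 1) \<in> wt d ` ({..<d} \<times> {..<d})" using c by auto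
qed

lemma wt_adj: "wt d (r, r+1) = - ((gap d r)^2)" "wt d (r+1, r) = - ((gap d r)^2)"
  unfolding wt_def gap_def by (simp_all add: power2_commute)

lemma Pc_e: assumes d: "d \<ge> 3" and c: "c + 1 < d" and rs: "r < d" "s < d"
  shows "Pc d c $$ (r,s) = (if (r = c \<and> s = c+1) \<or> (r = c+1 \<and> s = c) then - \<i> * sg d c / 2 else 0)"
proof -
  have "Pc d c $$ (r,s) = (if wt d (r,s) = wt d (c, c+1) then - \<i> * J_x d $$ (r,s) else 0)"
    unfolding Pc_def using rs J_x_carrier[of d] by (simp add: carrier_matD)
  also have "\<dots> = (if (r = c \<and> s = c+1) \<or> (r = c+1 \<and> s = c) then - \<i> * sg d c / 2 else 0)"
  proof (cases "s = r + 1")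
    case True
    have "wt d (r,s) = wt d (c, c+1) \<longleftrightarrow> r = c"
      using True wt_adj[of d r] wt_adj[of d c] gap_sq_inj[OF d, of r c] by auto
    then show ?thesis using True rs by (auto simp: J_x_entry)
  next
    case False
    show ?thesis
    proof (cases "r = s + 1")
      case True
      have "wt d (r,s) = wt d (c, c+1) \<longleftrightarrow> s = c"
        using True wt_adj[of d s] wt_adj[of d c] gap_sq_inj[OF d, of s c] by auto
      then show ?thesis using True False rs by (auto simp: J_x_entry)
    next
      case F2: False
      then show ?thesis using False rs by (auto simp: J_x_entry)
    qed
  qed
  finally show ?thesis .
qed




definition sr :: "nat \<Rightarrow> nat \<Rightarrow> real" where
  "sr d c = sqrt ((real d - 1 - real c) * (real c + 1))"

lemma sg_sr: "sg d c = complex_of_real (sr d c)" by (simp add: sg_def sr_def)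

lemma sr_pos: "c + 1 < d \<Longrightarrow> sr d c > 0"
  unfolding sr_def by (intro real_sqrt_gt_zero mult_pos_pos) auto

lemma Imm_adj: assumes d: "d \<ge> 3" and c: "c + 1 < d" shows "Imm d c (c+1) \<in> LL d"
proof -
  have "complex_of_real (-2 / sr d c) \<cdot>\<^sub>m Pc d c \<in> LL d"
    by (intro lie_generated.smult Pc_LL[OF d c])
  then show ?thesis
  proof (rule LG_eq)
    show "complex_of_real (-2 / sr d c) \<cdot>\<^sub>m Pc d c \<in> carrier_mat d d" by (simp add: Pc_def)
    show "Imm d c (c+1) \<in> carrier_mat d d" by simp
    fix r s assume rs: "r < d" "s < d"
    have nz: "sr d c \<noteq> 0" using sr_pos[OF c] by simp
    have "(complex_of_real (-2 / sr d c) \<cdot>\<^sub>m Pc d c) $$ (r,s) = complex_of_real (-2 / sr d c) * Pc d c $$ (r,s)"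
      using rs by (simp add: Pc_def)
    also have "\<dots> = Imm d c (c+1) $$ (r,s)"
      using rs nz by (auto simp: Pc_e[OF d c rs] Imm_e sg_sr field_simps)
    finally show "Imm d c (c+1) $$ (r,s) = (complex_of_real (-2 / sr d c) \<cdot>\<^sub>m Pc d c) $$ (r,s)" by simp
  qed
qed

lemma Sk_adj: assumes d: "d \<ge> 3" and c: "c + 1 < d" shows "Sk d c (c+1) \<in> LL d"
proof -
  define Q where "Q = Hm d * Pc d c - Pc d c * Hm d"
  have QL: "Q \<in> LL d" unfolding Q_def by (intro lie_generated.comm Hm_LL Pc_LL[OF d c])
  have Pcc: "Pc d c \<in> carrier_mat d d" by (simp add: Pc_def)
  have Qe: "\<And>r s. r < d \<Longrightarrow> s < d \<Longrightarrow> Q $$ (r,s) = (- \<i> * complex_of_real (eta d r) - - \<i> * complex_of_real (eta d s)) * Pc d c $$ (r,s)"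
    unfolding Q_def by (rule diag_comm[OF Hm_carrier Pcc]) (auto simp: Hm_e[OF d])
  have "complex_of_real (-2 / (gap d c * sr d c)) \<cdot>\<^sub>m Q \<in> LL d"
    by (intro lie_generated.smult QL)
  then show ?thesis
  proof (rule LG_eq)
    show "complex_of_real (-2 / (gap d c * sr d c)) \<cdot>\<^sub>m Q \<in> carrier_mat d d" using LL_carrier[OF QL] by simp
    show "Sk d c (c+1) \<in> carrier_mat d d" by simp
    fix r s assume rs: "r < d" "s < d"
    have nz: "sr d c \<noteq> 0" using sr_pos[OF c] by simp
    have nz2: "eta d c - eta d (c+1) \<noteq> 0" using gap_nz[OF d, of c] by (simp add: gap_def)
    have "(complex_of_real (-2 / (gap d c * sr d c)) \<cdot>\<^sub>m Q) $$ (r,s) = complex_of_real (-2 / (gap d c * sr d c)) * Q $$ (r,s)"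
      using rs LL_carrier[OF QL] by (simp add: carrier_matD)
    also have "\<dots> = Sk d c (c+1) $$ (r,s)"
    proof -
      have e1: "complex_of_real (-2 / (gap d c * sr d c)) * ((- \<i> * complex_of_real (eta d c) - - \<i> * complex_of_real (eta d (c+1))) * (- \<i> * sg d c / 2)) = 1"
        using nz nz2 unfolding gap_def sg_sr by (simp add: field_simps)
      have e2: "complex_of_real (-2 / (gap d c * sr d c)) * ((- \<i> * complex_of_real (eta d (c+1)) - - \<i> * complex_of_real (eta d c)) * (- \<i> * sg d c / 2)) = -1"
        using nz nz2 unfolding gap_def sg_sr by (simp add: field_simps)
      show ?thesis
        using rs e1 e2 by (auto simp: Qe Pc_e[OF d c rs] Sk_e)
    qed
    finally show "Sk d c (c+1) $$ (r,s) = (complex_of_real (-2 / (gap d c * sr d c)) \<cdot>\<^sub>m Q) $$ (r,s)" by simp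
  qed
qed




lemma pairs_LL: assumes d: "d \<ge> 3"
  shows "i < j \<Longrightarrow> j < d \<Longrightarrow> Sk d i j \<in> LL d \<and> Imm d i j \<in> LL d"
proof (induction j)
  case 0 then show ?case by simp
next
  case (Suc j)
  show ?case
  proof (cases "i = j")
    case True
    then show ?thesis using Sk_adj[OF d, of j] Imm_adj[OF d, of j] Suc.prems by simp
  next
    case False
    then have ij: "i < j" using Suc.prems by simp
    have IH: "Sk d i j \<in> LL d" "Imm d i j \<in> LL d" using Suc.IH ij Suc.prems by auto
    have adj: "Sk d j (j+1) \<in> LL d" using Sk_adj[OF d, of j] Suc.prems by simp
    have "Sk d i j * Sk d j (j+1) - Sk d j (j+1) * Sk d i j \<in> LL d"
      by (intro lie_generated.comm IH adj)
    moreover have "Imm d i j * Sk d j (j+1) - Sk d j (j+1) * Imm d i j \<in> LL d"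
      by (intro lie_generated.comm IH adj)
    moreover have "Sk d i j * Sk d j (j+1) - Sk d j (j+1) * Sk d i j = Sk d i (Suc j)"
      using C1[of i d j "j+1"] ij Suc.prems by simp
    moreover have "Imm d i j * Sk d j (j+1) - Sk d j (j+1) * Imm d i j = Imm d i (Suc j)"
      using C2[of i d j "j+1"] ij Suc.prems by simp
    ultimately show ?thesis by simp
  qed
qed

lemma Dg_LL: assumes d: "d \<ge> 3" and ij: "i < j" "j < d" shows "Dg d i j \<in> LL d"
proof -
  have "Sk d i j * Imm d i j - Imm d i j * Sk d i j \<in> LL d"
    using pairs_LL[OF d ij] by (intro lie_generated.comm) auto
  then have "2 \<cdot>\<^sub>m Dg d i j \<in> LL d" using C3[of i d j] ij by simp
  then have "complex_of_real (1/2) \<cdot>\<^sub>m (2 \<cdot>\<^sub>m Dg d i j) \<in> LL d" by (rule lie_generated.smult)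
  then show ?thesis
  proof (rule LG_eq)
    show "complex_of_real (1/2) \<cdot>\<^sub>m (2 \<cdot>\<^sub>m Dg d i j) \<in> carrier_mat d d" by simp
    show "Dg d i j \<in> carrier_mat d d" by simp
    fix r c assume "r < d" "c < d"
    then show "Dg d i j $$ (r,c) = (complex_of_real (1/2) \<cdot>\<^sub>m (2 \<cdot>\<^sub>m Dg d i j)) $$ (r,c)" by simp
  qed
qed




lemma su_sub_LL: assumes d: "d \<ge> 3" and A: "A \<in> su d" shows "A \<in> LL d"
proof -
  have Ac: "A \<in> carrier_mat d d" using A unfolding su_def by blast
  have Ah: "\<And>i j. i<d \<Longrightarrow> j<d \<Longrightarrow> A $$ (i, j) = - cnj (A $$ (j, i))" using A unfolding su_def by blast
  have At: "(\<Sum>i<d. A $$ (i,i)) = 0"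
  proof -
    have "mat_trace A = 0" using A unfolding su_def by blast
    then show ?thesis using Ac by (simp add: mat_trace_def)
  qed
  define n where "n = d - 1"
  have nd: "n < d" "Suc n = d" using d by (auto simp: n_def)
  define S1 where "S1 = {p :: nat \<times> nat. fst p < snd p \<and> snd p < d}"
  have fS1: "finite S1"
  proof -
    have "S1 \<subseteq> {..<d} \<times> {..<d}" by (auto simp: S1_def)
    then show ?thesis by (rule finite_subset) simp
  qed
  define F1 where "F1 p = complex_of_real (Re (A $$ p)) \<cdot>\<^sub>m Sk d (fst p) (snd p) + complex_of_real (Im (A $$ p)) \<cdot>\<^sub>m Imm d (fst p) (snd p)" for p
  define F2 where "F2 i = complex_of_real (Im (A $$ (i,i))) \<cdot>\<^sub>m Dg d i n" for i
  have F1L: "\<forall>p\<in>S1. F1 p \<in> LL d"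
    using pairs_LL[OF d] unfolding F1_def S1_def by (auto intro!: lie_generated.add lie_generated.smult)
  have F2L: "\<forall>i\<in>{..<n}. F2 i \<in> LL d"
    using Dg_LL[OF d] nd unfolding F2_def by (auto intro!: lie_generated.smult)
  obtain M1 where M1: "M1 \<in> LL d" "\<forall>r<d. \<forall>c<d. M1 $$ (r,c) = (\<Sum>p\<in>S1. F1 p $$ (r,c))"
    using LG_sum[OF HS_carrier fS1 F1L] by blast
  obtain M2 where M2: "M2 \<in> LL d" "\<forall>r<d. \<forall>c<d. M2 $$ (r,c) = (\<Sum>i\<in>{..<n}. F2 i $$ (r,c))"
    using LG_sum[OF HS_carrier _ F2L] by blast
  have M12: "M1 + M2 \<in> LL d" by (rule lie_generated.add[OF M1(1) M2(1)])
  have M2c: "M2 \<in> carrier_mat d d" using LL_carrier[OF M2(1)] .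
  show ?thesis
  proof (rule LG_eq[OF M12])
    show "M1 + M2 \<in> carrier_mat d d" using LL_carrier[OF M12] .
    show "A \<in> carrier_mat d d" by (rule Ac)
    fix r c assume rc: "r < d" "c < d"
    have s1: "(\<Sum>p\<in>S1. F1 p $$ (r,c)) = (if r < c then A $$ (r,c) else if c < r then - cnj (A $$ (c,r)) else 0)"
    proof -
      have "(\<Sum>p\<in>S1. F1 p $$ (r,c)) = (\<Sum>p\<in>S1. (if p = (r,c) then A $$ (r,c) else 0) + (if p = (c,r) then - cnj (A $$ (c,r)) else 0))"
      proof (rule sum.cong[OF refl])
        fix p assume p: "p \<in> S1"
        obtain i j where pij: "p = (i,j)" by (cases p)
        have ij: "i < j" "j < d" using p pij by (auto simp: S1_def)
        have e: "F1 p $$ (r,c) = complex_of_real (Re (A $$ (i,j))) * Sk d i j $$ (r,c) + complex_of_real (Im (A $$ (i,j))) * Imm d i j $$ (r,c)"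
          using rc by (simp add: F1_def pij)
        have z1: "A $$ (r,c) = complex_of_real (Re (A $$ (r,c))) + \<i> * complex_of_real (Im (A $$ (r,c)))"
          by (simp add: complex_eq_iff)
        have z2: "- cnj (A $$ (c,r)) = - complex_of_real (Re (A $$ (c,r))) + \<i> * complex_of_real (Im (A $$ (c,r)))"
          by (simp add: complex_eq_iff)
        show "F1 p $$ (r,c) = (if p = (r,c) then A $$ (r,c) else 0) + (if p = (c,r) then - cnj (A $$ (c,r)) else 0)"
          unfolding e using rc ij pij by (auto simp: Sk_e Imm_e complex_eq_iff)
      qed
      also have "\<dots> = (\<Sum>p\<in>S1. if p = (r,c) then A $$ (r,c) else 0) + (\<Sum>p\<in>S1. if p = (c,r) then - cnj (A $$ (c,r)) else 0)"
        by (rule sum.distrib)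
      also have "\<dots> = (if (r,c) \<in> S1 then A $$ (r,c) else 0) + (if (c,r) \<in> S1 then - cnj (A $$ (c,r)) else 0)"
        using fS1 by (simp add: sum.delta)
      also have "\<dots> = (if r < c then A $$ (r,c) else if c < r then - cnj (A $$ (c,r)) else 0)"
        using rc by (auto simp: S1_def)
      finally show ?thesis .
    qed
    have s2: "(\<Sum>i\<in>{..<n}. F2 i $$ (r,c)) = (if r = c then (if r < n then \<i> * complex_of_real (Im (A $$ (r,r))) else - \<i> * (\<Sum>i<n. complex_of_real (Im (A $$ (i,i))))) else 0)"
    proof -
      have "(\<Sum>i\<in>{..<n}. F2 i $$ (r,c)) = (\<Sum>i\<in>{..<n}. (if i = r then (if r = c then \<i> * complex_of_real (Im (A $$ (r,r))) else 0) else 0)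
           + (if r = c \<and> r = n then - \<i> * complex_of_real (Im (A $$ (i,i))) else 0))"
      proof (rule sum.cong[OF refl])
        fix i assume "i \<in> {..<n}"
        then have i: "i < n" by simp
        show "F2 i $$ (r,c) = (if i = r then (if r = c then \<i> * complex_of_real (Im (A $$ (r,r))) else 0) else 0)
           + (if r = c \<and> r = n then - \<i> * complex_of_real (Im (A $$ (i,i))) else 0)"
          using rc i by (auto simp: F2_def Dg_e)
      qed
      also have "\<dots> = (\<Sum>i\<in>{..<n}. (if i = r then (if r = c then \<i> * complex_of_real (Im (A $$ (r,r))) else 0) else 0))
           + (\<Sum>i\<in>{..<n}. (if r = c \<and> r = n then - \<i> * complex_of_real (Im (A $$ (i,i))) else 0))"
        by (rule sum.distrib)
      also have "\<dots> = (if r = c then (if r < n then \<i> * complex_of_real (Im (A $$ (r,r))) else - \<i> * (\<Sum>i<n. complex_of_real (Im (A $$ (i,i))))) else 0)"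
        using rc nd by (auto simp: sum.delta sum_distrib_left)
      finally show ?thesis .
    qed
    have diag: "A $$ (r,r) = \<i> * complex_of_real (Im (A $$ (r,r)))"
    proof -
      have h: "Re (A $$ (r,r)) = Re (- cnj (A $$ (r,r)))" using arg_cong[OF Ah[OF rc(1) rc(1)], of Re] .
      have "Re (A $$ (r,r)) = 0" using h by simp
      then show ?thesis by (simp add: complex_eq_iff)
    qed
    have lastd: "- \<i> * (\<Sum>i<n. complex_of_real (Im (A $$ (i,i)))) = A $$ (n,n)"
    proof -
      have "(\<Sum>i<d. Im (A $$ (i,i))) = 0" using At by (metis Im_sum zero_complex.sel(2))
      then have "(\<Sum>i<n. Im (A $$ (i,i))) = - Im (A $$ (n,n))" using nd(2)[symmetric] by simp
      moreover have "Re (A $$ (n,n)) = 0"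
      proof -
        have h: "Re (A $$ (n,n)) = Re (- cnj (A $$ (n,n)))" using arg_cong[OF Ah[OF nd(1) nd(1)], of Re] .
        then show ?thesis by simp
      qed
      ultimately show ?thesis by (simp add: complex_eq_iff flip: of_real_sum)
    qed
    have "(M1 + M2) $$ (r,c) = M1 $$ (r,c) + M2 $$ (r,c)" using rc M2c by simp
    also have "\<dots> = A $$ (r,c)"
    proof -
      consider "r < c" | "c < r" | "r = c" by arith
      then show ?thesis
      proof cases
        case 1 then show ?thesis using rc M1(2) M2(2) s1 s2 by simp
      next
        case 2 then show ?thesis using rc M1(2) M2(2) s1 s2 Ah[OF rc] by simp
      next
        case 3
        show ?thesis
        proof (cases "r < n")
          case True then show ?thesis using rc M1(2) M2(2) s1 s2 3 diag by simp
        next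
          case False
          then have "r = n" using rc nd by simp
          then show ?thesis using rc M1(2) M2(2) s1 s2 3 lastd by simp
        qed
      qed
    qed
    finally show "A $$ (r,c) = (M1 + M2) $$ (r,c)" by simp
  qed
qed



theorem lemma1:
  fixes d :: nat
  assumes "d > 2"
  shows "lie_generated d {J_x d, J_y d, T_tensor d 2 0} = su d"
proof
  have d: "d \<ge> 3" using assms by simp
  show "lie_generated d {J_x d, J_y d, T_tensor d 2 0} \<subseteq> su d" by (rule sub1[OF d])
  show "su d \<subseteq> lie_generated d {J_x d, J_y d, T_tensor d 2 0}" using su_sub_LL[OF d] by blast
qed

end
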